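(* Let $\nu\ge \frac53$, let $\mu=|\nu^2-\frac14|$, and let $\mathcal{H}_\nu(x)=|x^2-\mu|^{1/4}J_\nu(x)$ for $x>0$. Then the first (leftmost) positive local maximum of $\mathcal{H}_\nu$ on $(0,\infty)$ is attained at a point $\xi$ satisfying $$\xi>\nu\sqrt{1-(2\nu)^{-2/3}}.$$
   Context: $J_\nu$ is the Bessel function of the first kind of order $\nu$. *)

theory Defs
  imports "HOL-Analysis.Analysis"
begin

text \<open>Bessel function of the first kind of real order nu, via its power series
  (valid for x > 0; used only there).\<close>
definition bessel_J :: "real \<Rightarrow> real \<Rightarrow> real" where
  "bessel_J nu x =
     (\<Sum>k. (-1) ^ k / (fact k * Gamma (real k + nu + 1)) * (x / 2) powr (2 * real k + nu))"

definition calH :: "real \<Rightarrow> real \<Rightarrow> real" where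
  "calH nu x = \<bar>x\<^sup>2 - \<bar>nu\<^sup>2 - 1/4\<bar>\<bar> powr (1/4) * bessel_J nu x"

definition local_max_pos :: "(real \<Rightarrow> real) \<Rightarrow> real \<Rightarrow> bool" where
  "local_max_pos f xi \<longleftrightarrow> xi > 0 \<and>
     (\<exists>e>0. \<forall>y. y > 0 \<and> \<bar>y - xi\<bar> < e \<longrightarrow> f y \<le> f xi)"

definition first_pos_local_max :: "(real \<Rightarrow> real) \<Rightarrow> real \<Rightarrow> bool" where
  "first_pos_local_max f xi \<longleftrightarrow> local_max_pos f xi \<and> f xi > 0 \<and>
     (\<forall>eta. 0 < eta \<and> eta < xi \<longrightarrow> \<not> (local_max_pos f eta \<and> f eta > 0))"

end

theory Submission
  imports Defs
begin


locale bess =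
  fixes nu :: real
  assumes nu_ge: "nu \<ge> 5/3"
begin

definition a :: "nat \<Rightarrow> real" where
  "a k = (-1) ^ k / (fact k * Gamma (real k + nu + 1))"

lemma nu_pos: "nu > 0" using nu_ge by simp

lemma Gpos: "Gamma (real k + nu + 1) > 0"
  using nu_pos by (intro Gamma_real_pos) simp

lemma a_Suc: "a (Suc n) = - a n / ((real n + 1) * (real n + nu + 1))"
proof -
  have "Gamma (real (Suc n) + nu + 1) = (real n + nu + 1) * Gamma (real n + nu + 1)"
  proof -
    have "real n + nu + 1 \<notin> \<int>\<^sub>\<le>\<^sub>0" using nu_pos
      by (auto elim!: nonpos_Ints_cases)
    then have "Gamma ((real n + nu + 1) + 1) = (real n + nu + 1) * Gamma (real n + nu + 1)"
      by (rule Gamma_plus1)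
    then show ?thesis by (simp add: add_ac)
  qed
  then show ?thesis using Gpos[of n] nu_pos
    by (simp add: a_def field_simps)
qed

lemma a_rec: "a n = - (real n + 1) * (real n + nu + 1) * a (Suc n)"
proof -
  have "(real n + 1) * (real n + nu + 1) \<noteq> 0" using nu_pos by (smt (verit) mult_pos_pos of_nat_0_le_iff)
  then show ?thesis by (simp add: a_Suc field_simps)
qed

lemma a_summable: "summable (\<lambda>n. a n * y ^ n)"
proof (rule summable_ratio_test[where c="1/2" and N="nat \<lceil>2 * \<bar>y\<bar>\<rceil>"])
  fix n assume n: "n \<ge> nat \<lceil>2 * \<bar>y\<bar>\<rceil>"
  then have n2: "2 * \<bar>y\<bar> \<le> real n" by linarith
  have d: "(real n + 1) * (real n + nu + 1) \<ge> 2 * \<bar>y\<bar>"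
  proof -
    have "(real n + 1) * (real n + nu + 1) \<ge> (real n + 1) * 1"
      using nu_pos by (intro mult_left_mono) auto
    then show ?thesis using n2 by (simp only: mult_1_right)
  qed
  have "norm (a (Suc n) * y ^ Suc n) = \<bar>a n\<bar> * \<bar>y\<bar> ^ n * (\<bar>y\<bar> / ((real n + 1) * (real n + nu + 1)))"
    using nu_pos by (simp add: a_Suc abs_mult power_abs abs_divide)
  also have "\<dots> \<le> \<bar>a n\<bar> * \<bar>y\<bar> ^ n * (1/2)"
  proof (intro mult_left_mono)
    show "\<bar>y\<bar> / ((real n + 1) * (real n + nu + 1)) \<le> 1 / 2"
      using d nu_pos by (simp add: divide_simps)
  qed auto
  finally show "norm (a (Suc n) * y ^ Suc n) \<le> 1/2 * norm (a n * y ^ n)"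
    by (simp add: abs_mult power_abs)
qed simp

definition f :: "real \<Rightarrow> real" where "f t = (\<Sum>n. a n * t ^ n)"
definition f1 :: "real \<Rightarrow> real" where "f1 t = (\<Sum>n. diffs a n * t ^ n)"
definition ga :: "nat \<Rightarrow> real" where "ga n = (nu + 2 * real n) * a n"
definition g :: "real \<Rightarrow> real" where "g t = (\<Sum>n. ga n * t ^ n)"
definition g1 :: "real \<Rightarrow> real" where "g1 t = (\<Sum>n. diffs ga n * t ^ n)"

lemma da_summable: "summable (\<lambda>n. diffs a n * y ^ n)"
  by (rule termdiff_converges_all) (rule a_summable)

lemma na_sums: "(\<lambda>n. real n * a n * y ^ n) sums (y * f1 y)"
proof -
  have "(\<lambda>n. y * (diffs a n * y ^ n)) sums (y * f1 y)"
    unfolding f1_def by (intro sums_mult summable_sums da_summable)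
  moreover have "(\<lambda>n. y * (diffs a n * y ^ n)) = (\<lambda>n. real (Suc n) * a (Suc n) * y ^ (Suc n))"
    by (auto simp: diffs_def)
  ultimately have "(\<lambda>n. real (Suc n) * a (Suc n) * y ^ (Suc n)) sums (y * f1 y)" by simp
  from sums_Suc_iff[THEN iffD1, OF this] show ?thesis by simp
qed

lemma ga_sums: "(\<lambda>n. ga n * y ^ n) sums (nu * f y + 2 * (y * f1 y))"
proof -
  have "(\<lambda>n. nu * (a n * y ^ n) + 2 * (real n * a n * y ^ n)) sums (nu * f y + 2 * (y * f1 y))"
    unfolding f_def by (intro sums_add sums_mult summable_sums a_summable na_sums)
  then show ?thesis by (simp add: ga_def algebra_simps)
qed

lemma ga_summable: "summable (\<lambda>n. ga n * y ^ n)"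
  using ga_sums sums_summable by blast

lemma g_eq: "g y = nu * f y + 2 * y * f1 y"
  using ga_sums[of y] unfolding g_def by (simp add: sums_iff)

lemma diffs_ga: "diffs ga n = - nu * diffs a n - 2 * a n"
  by (simp add: diffs_def ga_def a_rec[of n] algebra_simps)

lemma g1_eq: "g1 y = - nu * f1 y - 2 * f y"
proof -
  have "(\<lambda>n. (- nu) * (diffs a n * y ^ n) - 2 * (a n * y ^ n)) sums (- nu * f1 y - 2 * f y)"
    unfolding f_def f1_def by (intro sums_diff sums_mult summable_sums a_summable da_summable)
  then show ?thesis unfolding g1_def by (simp add: diffs_ga sums_iff algebra_simps)
qed

lemma f_deriv: "(f has_real_derivative f1 t) (at t)"
  unfolding f_def f1_def by (rule termdiffs_strong_converges_everywhere) (rule a_summable)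

lemma g_deriv: "(g has_real_derivative g1 t) (at t)"
  unfolding g_def g1_def by (rule termdiffs_strong_converges_everywhere) (rule ga_summable)

lemma f0: "f 0 = 1 / Gamma (nu + 1)"
  using powser_zero[of a] unfolding f_def by (simp add: a_def)

lemma f0_pos: "f 0 > 0" using Gpos[of 0] by (simp add: f0)

lemma g0_pos: "g 0 > 0" using f0_pos nu_pos by (simp add: g_eq)

end



context bess begin

definition J :: "real \<Rightarrow> real" where "J x = (x/2) powr nu * f (x\<^sup>2/4)"
definition u :: "real \<Rightarrow> real" where "u x = (x/2) powr nu * g (x\<^sup>2/4)"

lemma p_deriv:
  assumes "x > 0"
  shows "((\<lambda>x. (x/2) powr nu) has_real_derivative nu * (x/2) powr nu / x) (at x)"
proof -
  have d: "((\<lambda>x. x/2) has_real_derivative 1/2) (at x)"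
    by (auto intro!: derivative_eq_intros)
  have "((\<lambda>x. (x/2) powr nu) has_real_derivative nu * (x/2) powr (nu - 1) * (1/2)) (at x)"
    using DERIV_chain2[OF has_real_derivative_powr d, of nu] assms by simp
  moreover have "nu * (x/2) powr (nu - 1) * (1/2) = nu * (x/2) powr nu / x"
    using assms by (simp add: powr_diff)
  ultimately show ?thesis by simp
qed

lemma sq_deriv: "((\<lambda>x. x\<^sup>2/4) has_real_derivative x/2) (at x)"
  by (auto intro!: derivative_eq_intros)

lemma J_deriv:
  assumes "x > 0"
  shows "(J has_real_derivative u x / x) (at x)"
proof -
  have "(J has_real_derivative (nu * (x/2) powr nu / x) * f (x\<^sup>2/4) + (f1 (x\<^sup>2/4) * (x/2)) * (x/2) powr nu) (at x)"
    unfolding J_def[abs_def]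
    by (rule DERIV_mult[OF p_deriv[OF assms] DERIV_chain2[OF f_deriv sq_deriv]])
  moreover have "(nu * (x/2) powr nu / x) * f (x\<^sup>2/4) + (f1 (x\<^sup>2/4) * (x/2)) * (x/2) powr nu = u x / x"
    using assms unfolding u_def g_eq by (simp add: field_simps power2_eq_square)
  ultimately show ?thesis by simp
qed

lemma u_deriv:
  assumes "x > 0"
  shows "(u has_real_derivative (nu\<^sup>2 - x\<^sup>2) * J x / x) (at x)"
proof -
  have "(u has_real_derivative (nu * (x/2) powr nu / x) * g (x\<^sup>2/4) + (g1 (x\<^sup>2/4) * (x/2)) * (x/2) powr nu) (at x)"
    unfolding u_def[abs_def]
    by (rule DERIV_mult[OF p_deriv[OF assms] DERIV_chain2[OF g_deriv sq_deriv]])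
  moreover have "(nu * (x/2) powr nu / x) * g (x\<^sup>2/4) + (g1 (x\<^sup>2/4) * (x/2)) * (x/2) powr nu = (nu\<^sup>2 - x\<^sup>2) * J x / x"
    using assms unfolding J_def g_eq g1_eq by (simp add: field_simps power2_eq_square)
  ultimately show ?thesis by simp
qed

lemma J_cont: "x > 0 \<Longrightarrow> isCont J x"
  using J_deriv DERIV_isCont by blast
lemma u_cont: "x > 0 \<Longrightarrow> isCont u x"
  using u_deriv DERIV_isCont by blast

lemma J_cont_on: "0 < l \<Longrightarrow> continuous_on {l..r} J"
  by (intro continuous_at_imp_continuous_on ballI J_cont) auto
lemma u_cont_on: "0 < l \<Longrightarrow> continuous_on {l..r} u"
  by (intro continuous_at_imp_continuous_on ballI u_cont) auto

lemma p_lim: "((\<lambda>x. (x/2) powr nu) \<longlongrightarrow> 0) (at_right 0)"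
proof (rule tendsto_zero_powrI)
  show "((\<lambda>x::real. x/2) \<longlongrightarrow> 0) (at_right 0)"
    by (auto intro!: tendsto_eq_intros)
  show "\<forall>\<^sub>F x in at_right 0. 0 \<le> (x::real)/2"
    using eventually_at_right_less[of "0::real"] by eventually_elim simp
qed (use nu_pos in auto)

lemma sq_lim: "((\<lambda>x::real. x\<^sup>2/4) \<longlongrightarrow> 0) (at_right 0)"
  by (auto intro!: tendsto_eq_intros)

lemma f_lim: "((\<lambda>x. f (x\<^sup>2/4)) \<longlongrightarrow> f 0) (at_right 0)"
  by (rule isCont_tendsto_compose[OF _ sq_lim]) (use f_deriv DERIV_isCont in blast)
lemma g_lim: "((\<lambda>x. g (x\<^sup>2/4)) \<longlongrightarrow> g 0) (at_right 0)"
  by (rule isCont_tendsto_compose[OF _ sq_lim]) (use g_deriv DERIV_isCont in blast)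

lemma J_lim: "(J \<longlongrightarrow> 0) (at_right 0)"
  unfolding J_def[abs_def] using tendsto_mult[OF p_lim f_lim] by simp
lemma u_lim: "(u \<longlongrightarrow> 0) (at_right 0)"
  unfolding u_def[abs_def] using tendsto_mult[OF p_lim g_lim] by simp

lemma J_pos_near: "\<exists>s>0. \<forall>x. 0 < x \<and> x < s \<longrightarrow> J x > 0"
proof -
  have "\<forall>\<^sub>F x in at_right 0. f (x\<^sup>2/4) > 0" using order_tendstoD(1)[OF f_lim f0_pos] .
  moreover note eventually_at_right_less[of "0::real"]
  ultimately have "\<forall>\<^sub>F x in at_right 0. J x > 0"
    by eventually_elim (simp add: J_def)
  then show ?thesis unfolding eventually_at_right_field by auto
qed

lemma u_pos_near: "\<exists>s>0. \<forall>x. 0 < x \<and> x < s \<longrightarrow> u x > 0"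
proof -
  have "\<forall>\<^sub>F x in at_right 0. g (x\<^sup>2/4) > 0" using order_tendstoD(1)[OF g_lim g0_pos] .
  moreover note eventually_at_right_less[of "0::real"]
  ultimately have "\<forall>\<^sub>F x in at_right 0. u x > 0"
    by eventually_elim (simp add: u_def)
  then show ?thesis unfolding eventually_at_right_field by auto
qed

definition D :: "real \<Rightarrow> real" where "D x = (u x)\<^sup>2 - (nu\<^sup>2 - x\<^sup>2) * (J x)\<^sup>2"

lemma D_deriv:
  assumes "x > 0"
  shows "(D has_real_derivative 2 * x * (J x)\<^sup>2) (at x)"
proof -
  have "(D has_real_derivative 2 * u x * ((nu\<^sup>2 - x\<^sup>2) * J x / x) - ((0 - 2 * x) * (J x)\<^sup>2 + (nu\<^sup>2 - x\<^sup>2) * (2 * J x * (u x / x)))) (at x)"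
    unfolding D_def[abs_def]
    by (rule derivative_eq_intros refl u_deriv J_deriv assms | simp)+
  moreover have "2 * u x * ((nu\<^sup>2 - x\<^sup>2) * J x / x) - ((0 - 2 * x) * (J x)\<^sup>2 + (nu\<^sup>2 - x\<^sup>2) * (2 * J x * (u x / x))) = 2 * x * (J x)\<^sup>2"
    using assms by (simp add: field_simps)
  ultimately show ?thesis by simp
qed

lemma D_lim: "(D \<longlongrightarrow> 0) (at_right 0)"
proof -
  have "((\<lambda>x. (u x)\<^sup>2 - (nu\<^sup>2 - x\<^sup>2) * (J x)\<^sup>2) \<longlongrightarrow> 0\<^sup>2 - (nu\<^sup>2 - 0\<^sup>2) * 0\<^sup>2) (at_right 0)"
    by (intro tendsto_intros u_lim J_lim)
  then show ?thesis unfolding D_def[abs_def] by simp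
qed

lemma D_mono: 
  assumes "0 < x" "x \<le> y" shows "D x \<le> D y"
proof (rule DERIV_nonneg_imp_nondecreasing[of x y D])
  fix z assume "x \<le> z" "z \<le> y"
  with assms show "\<exists>w. DERIV D z :> w \<and> w \<ge> 0"
    using D_deriv[of z] by (intro exI[of _ "2*z*(J z)\<^sup>2"]) auto
qed (use assms in auto)

lemma D_nonneg: "0 < x \<Longrightarrow> D x \<ge> 0"
proof -
  assume x: "0 < x"
  have "\<forall>\<^sub>F y in at_right 0. D y \<le> D x"
    using eventually_at_right_field[of "\<lambda>y. D y \<le> D x" 0] x D_mono by auto
  then show ?thesis using tendsto_upperbound[OF D_lim] by auto
qed

lemma D_pos: "0 < x \<Longrightarrow> D x > 0"
proof -
  assume x: "0 < x"
  obtain s0 where s0: "s0 > 0" "\<And>y. 0 < y \<Longrightarrow> y < s0 \<Longrightarrow> J y > 0" using J_pos_near by auto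
  define s where "s = min x (s0/2)"
  have s: "0 < s" "s \<le> x" "s < s0" using x s0 by (auto simp: s_def)
  have "D (s/2) < D s"
  proof (rule DERIV_pos_imp_increasing[of "s/2" s D])
    fix y assume "s/2 \<le> y" "y \<le> s"
    then show "\<exists>z. DERIV D y :> z \<and> z > 0"
      using s s0(2)[of y] D_deriv[of y] by (intro exI[of _ "2 * y * (J y)\<^sup>2"]) auto
  qed (use s in auto)
  moreover have "D (s/2) \<ge> 0" using D_nonneg s by simp
  moreover have "D s \<le> D x" using D_mono s by simp
  ultimately show ?thesis by simp
qed

end



context bess begin

lemma u_ne: "0 < x \<Longrightarrow> x < nu \<Longrightarrow> u x \<noteq> 0"
proof
  assume x: "0 < x" "x < nu" and "u x = 0"
  then have "D x = - (nu\<^sup>2 - x\<^sup>2) * (J x)\<^sup>2" by (simp add: D_def algebra_simps)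
  moreover have "nu\<^sup>2 - x\<^sup>2 \<ge> 0" using x by (simp add: power_mono)
  ultimately have "D x \<le> 0" by (simp add: mult_nonpos_nonneg)
  with D_pos[OF x(1)] show False by simp
qed

lemma u_pos: assumes x: "0 < x" "x < nu" shows "u x > 0"
proof (rule ccontr)
  assume "\<not> u x > 0"
  with u_ne[OF x] have ux: "u x < 0" by simp
  obtain s0 where s0: "s0 > 0" "\<And>y. 0 < y \<Longrightarrow> y < s0 \<Longrightarrow> u y > 0" using u_pos_near by auto
  define s where "s = min (x/2) (s0/2)"
  have s: "0 < s" "s < x" "u s > 0" using x s0 by (auto simp: s_def)
  obtain z where z: "s \<le> z" "z \<le> x" "u z = 0"
    using IVT2'[of u x 0 s] s ux u_cont_on[of s x] by auto
  then show False using u_ne[of z] s x by auto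
qed

lemma J_pos: assumes x: "0 < x" "x < nu" shows "J x > 0"
proof -
  obtain s0 where s0: "s0 > 0" "\<And>y. 0 < y \<Longrightarrow> y < s0 \<Longrightarrow> J y > 0" using J_pos_near by auto
  define s where "s = min (x/2) (s0/2)"
  have s: "0 < s" "s < x" "J s > 0" using x s0 by (auto simp: s_def)
  have "J s < J x"
  proof (rule DERIV_pos_imp_increasing[of s x J])
    fix z assume "s \<le> z" "z \<le> x"
    then show "\<exists>w. DERIV J z :> w \<and> w > 0"
      using s x J_deriv[of z] u_pos[of z] by (intro exI[of _ "u z / z"]) auto
  qed (use s in auto)
  with s show ?thesis by simp
qed

lemma u_gt: assumes x: "0 < x" "x < nu" shows "u x > sqrt (nu\<^sup>2 - x\<^sup>2) * J x"
proof -
  have w: "nu\<^sup>2 - x\<^sup>2 \<ge> 0" using x by (simp add: power_mono)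
  have "(sqrt (nu\<^sup>2 - x\<^sup>2) * J x)\<^sup>2 < (u x)\<^sup>2"
    using D_pos[OF x(1)] w by (simp add: D_def power_mult_distrib)
  then show ?thesis using u_pos[OF x] J_pos[OF x] w
    by (smt (verit) power2_less_imp_less real_sqrt_ge_zero zero_le_mult_iff)
qed

definition y :: "real \<Rightarrow> real" where "y x = u x / J x"

lemma y_deriv: assumes x: "0 < x" "x < nu"
  shows "(y has_real_derivative - D x / (x * (J x)\<^sup>2)) (at x)"
proof -
  have "(y has_real_derivative (((nu\<^sup>2 - x\<^sup>2) * J x / x) * J x - u x * (u x / x)) / (J x * J x)) (at x)"
    unfolding y_def[abs_def] using J_pos[OF x]
    by (intro DERIV_divide u_deriv J_deriv x) auto
  moreover have "(((nu\<^sup>2 - x\<^sup>2) * J x / x) * J x - u x * (u x / x)) / (J x * J x) = - D x / (x * (J x)\<^sup>2)"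
    using x J_pos[OF x] by (simp add: D_def field_simps power2_eq_square)
  ultimately show ?thesis by simp
qed

lemma y_decr: assumes "0 < x1" "x1 < x2" "x2 < nu" shows "y x2 < y x1"
proof (rule DERIV_neg_imp_decreasing[of x1 x2 y])
  fix z assume z: "x1 \<le> z" "z \<le> x2"
  then have z': "0 < z" "z < nu" using assms by auto
  have "- D z / (z * (J z)\<^sup>2) < 0" using D_pos[of z] J_pos[OF z'] z' by (simp add: divide_neg_pos)
  then show "\<exists>w. DERIV y z :> w \<and> w < 0" using y_deriv[OF z'] by blast
qed (use assms in auto)

lemma y_pos: "0 < x \<Longrightarrow> x < nu \<Longrightarrow> y x > 0"
  using u_pos J_pos by (simp add: y_def)

lemma y_gt: "0 < x \<Longrightarrow> x < nu \<Longrightarrow> y x > sqrt (nu\<^sup>2 - x\<^sup>2)"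
  using u_gt J_pos by (simp add: y_def pos_less_divide_eq)

end



context bess begin

lemma bessel_eq: assumes x: "x > 0" shows "bessel_J nu x = J x"
proof -
  have t: "(-1) ^ k / (fact k * Gamma (real k + nu + 1)) * (x / 2) powr (2 * real k + nu)
        = (x/2) powr nu * (a k * (x\<^sup>2/4) ^ k)" for k
  proof -
    have "(x / 2) powr (2 * real k + nu) = (x/2) powr (real (2*k)) * (x/2) powr nu"
      by (simp add: powr_add)
    also have "(x/2) powr (real (2*k)) = (x\<^sup>2/4) ^ k"
    proof -
      have "(x/2) powr (real (2*k)) = (x/2) ^ (2*k)" by (rule powr_realpow) (use x in simp)
      also have "\<dots> = ((x/2)\<^sup>2) ^ k" by (simp only: power_mult)
      also have "(x/2)\<^sup>2 = x\<^sup>2/4" by (simp add: power_divide)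
      finally show ?thesis .
    qed
    finally show ?thesis by (simp add: a_def)
  qed
  show ?thesis unfolding bessel_J_def t J_def f_def
    by (rule suminf_mult[OF a_summable])
qed

definition mu :: real where "mu = nu\<^sup>2 - 1/4"
definition q :: "real \<Rightarrow> real" where "q x = (mu - x\<^sup>2) powr (1/4)"
definition H :: "real \<Rightarrow> real" where "H x = q x * J x"
definition R :: "real \<Rightarrow> real" where "R x = y x / x - x / (2 * (mu - x\<^sup>2))"

lemma mu_pos: "mu > 0"
proof -
  have "1 \<le> nu\<^sup>2" using nu_ge by (intro one_le_power) simp
  then show ?thesis unfolding mu_def by simp
qed

definition sm where "sm = sqrt mu"

lemma sm_pos: "sm > 0" using mu_pos by (simp add: sm_def)
lemma sm_lt: "sm < nu"
proof -
  have "mu < nu\<^sup>2" by (simp add: mu_def)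
  then have "sqrt mu < sqrt (nu\<^sup>2)" by (rule real_sqrt_less_mono)
  then show ?thesis using nu_pos by (simp add: sm_def)
qed

lemma lt_sm: "0 < x \<Longrightarrow> x < sm \<Longrightarrow> x\<^sup>2 < mu"
proof -
  assume "0 < x" "x < sm"
  then have "x\<^sup>2 < sm\<^sup>2" by (simp add: power_strict_mono)
  then show ?thesis using mu_pos by (simp add: sm_def)
qed

lemma calH_eq: assumes x: "0 < x" "x < sm" shows "calH nu x = H x"
proof -
  have "\<bar>nu\<^sup>2 - 1/4\<bar> = mu" using mu_pos by (simp add: mu_def)
  moreover have "\<bar>x\<^sup>2 - mu\<bar> = mu - x\<^sup>2" using lt_sm[OF x] by simp
  ultimately show ?thesis unfolding calH_def H_def q_def using bessel_eq[OF x(1)] by simp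
qed

lemma q_pos: assumes "0 < x" "x < sm" shows "q x > 0"
  using lt_sm[OF assms] by (simp add: q_def)

lemma H_pos: "0 < x \<Longrightarrow> x < sm \<Longrightarrow> H x > 0"
  using q_pos J_pos sm_lt by (simp add: H_def)

lemma H_deriv: assumes x: "0 < x" "x < sm"
  shows "(H has_real_derivative q x * J x * R x) (at x)"
proof -
  have m: "mu - x\<^sup>2 > 0" using lt_sm[OF x] by simp
  have xn: "x < nu" using x sm_lt by simp
  have dq: "((\<lambda>x. mu - x\<^sup>2) has_real_derivative - 2 * x) (at x)"
    by (auto intro!: derivative_eq_intros)
  have "(q has_real_derivative (1/4) * (mu - x\<^sup>2) powr (1/4 - 1) * (- 2 * x)) (at x)"
    unfolding q_def[abs_def] by (rule DERIV_chain2[OF has_real_derivative_powr[OF m] dq])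
  then have "(H has_real_derivative (1/4) * (mu - x\<^sup>2) powr (1/4 - 1) * (- 2 * x) * J x + u x / x * q x) (at x)"
    unfolding H_def[abs_def] by (rule DERIV_mult[OF _ J_deriv[OF x(1)]])
  moreover have "(1/4) * (mu - x\<^sup>2) powr (1/4 - 1) * (- 2 * x) * J x + u x / x * q x = q x * J x * R x"
  proof -
    have e: "(mu - x\<^sup>2) powr (1/4 - 1) = q x / (mu - x\<^sup>2)"
    proof -
      have "(mu - x\<^sup>2) powr (1/4 - 1) = (mu - x\<^sup>2) powr (1/4) / (mu - x\<^sup>2) powr 1"
        by (rule powr_diff)
      then show ?thesis using m unfolding q_def by simp
    qed
    show ?thesis
      using m x J_pos[OF x(1) xn] unfolding R_def y_def e
      by (simp add: field_simps)
  qed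
  ultimately show ?thesis by simp
qed

lemma R_decr: assumes "0 < x1" "x1 < x2" "x2 < sm" shows "R x2 < R x1"
proof -
  have n: "x2 < nu" using assms sm_lt by simp
  have y: "y x2 < y x1" "0 < y x2" using y_decr[of x1 x2] y_pos[of x2] assms n by auto
  have "y x2 / x2 < y x1 / x1"
  proof -
    have "y x2 / x2 < y x2 / x1" using y assms by (simp add: divide_strict_left_mono)
    also have "\<dots> < y x1 / x1" using y assms by (simp add: divide_strict_right_mono)
    finally show ?thesis .
  qed
  moreover have "x1 / (2 * (mu - x1\<^sup>2)) < x2 / (2 * (mu - x2\<^sup>2))"
  proof -
    have m2: "mu - x2\<^sup>2 > 0" using lt_sm[of x2] assms by simp
    have "x1\<^sup>2 < x2\<^sup>2" using assms by (simp add: power_strict_mono)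
    then have "mu - x2\<^sup>2 < mu - x1\<^sup>2" by simp
    then show ?thesis using m2 assms
      by (simp add: frac_less)
  qed
  ultimately show ?thesis unfolding R_def by simp
qed

end



context bess begin

lemma R_zero_sign:
  assumes xi: "0 < xi" "xi < sm" "R xi = 0"
  shows "\<And>z. 0 < z \<Longrightarrow> z < xi \<Longrightarrow> R z > 0"
    and "\<And>z. xi < z \<Longrightarrow> z < sm \<Longrightarrow> R z < 0"
  using R_decr[of _ xi] R_decr[of xi] xi by auto

lemma local_max_result:
  assumes xi: "0 < xi" "xi < sm" "R xi = 0"
  shows "first_pos_local_max (calH nu) xi"
proof -
  note Rp = R_zero_sign(1)[OF xi] and Rn = R_zero_sign(2)[OF xi]
  have inc: "H z \<le> H xi" if z: "0 < z" "z \<le> xi" for z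
  proof (rule DERIV_nonneg_imp_nondecreasing[of z xi H])
    fix w assume w: "z \<le> w" "w \<le> xi"
    then have w': "0 < w" "w < sm" using z xi by auto
    have "R w \<ge> 0" using Rp[of w] w w' xi by (cases "w = xi") auto
    then have "q w * J w * R w \<ge> 0" using q_pos[OF w'] J_pos[of w] w' sm_lt by simp
    then show "\<exists>d. DERIV H w :> d \<and> d \<ge> 0" using H_deriv[OF w'] by blast
  qed (use z in auto)
  have dec: "H z \<le> H xi" if z: "xi \<le> z" "z < sm" for z
  proof (rule DERIV_nonpos_imp_nonincreasing[of xi z H])
    fix w assume w: "xi \<le> w" "w \<le> z"
    then have w': "0 < w" "w < sm" using z xi by auto
    have "R w \<le> 0" using Rn[of w] w w' xi by (cases "w = xi") auto
    then have "q w * J w * R w \<le> 0" using q_pos[OF w'] J_pos[of w] w' sm_lt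
      by (simp add: mult_nonneg_nonpos)
    then show "\<exists>d. DERIV H w :> d \<and> d \<le> 0" using H_deriv[OF w'] by blast
  qed (use z in auto)
  have lm: "local_max_pos (calH nu) xi"
    unfolding local_max_pos_def
  proof (intro conjI exI[of _ "min xi (sm - xi)"] allI impI)
    fix z assume z: "0 < z \<and> \<bar>z - xi\<bar> < min xi (sm - xi)"
    then have z': "0 < z" "z < sm" by auto
    have "H z \<le> H xi" using inc[of z] dec[of z] z' by (cases "z \<le> xi") auto
    then show "calH nu z \<le> calH nu xi" using calH_eq[OF z'] calH_eq[OF xi(1,2)] by simp
  qed (use xi in auto)
  moreover have "calH nu xi > 0" using calH_eq[OF xi(1,2)] H_pos[OF xi(1,2)] by simp
  moreover have "\<not> (local_max_pos (calH nu) eta \<and> calH nu eta > 0)" if eta: "0 < eta" "eta < xi" for eta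
  proof
    assume "local_max_pos (calH nu) eta \<and> calH nu eta > 0"
    then obtain e where e: "e > 0" "\<And>z. z > 0 \<and> \<bar>z - eta\<bar> < e \<Longrightarrow> calH nu z \<le> calH nu eta"
      unfolding local_max_pos_def by auto
    define z where "z = eta + min (e/2) ((xi - eta)/2)"
    have m: "min (e/2) ((xi - eta)/2) \<le> (xi - eta)/2" "min (e/2) ((xi - eta)/2) \<le> e/2"
      "min (e/2) ((xi - eta)/2) > 0" using e eta by (simp_all only: min.cobounded1 min.cobounded2) simp
    have zz: "z - eta = min (e/2) ((xi - eta)/2)" by (simp add: z_def)
    have z1: "eta < z" using e(1) eta m zz by argo
    have z2: "z < xi" using e(1) eta m zz by argo
    have z3: "\<bar>z - eta\<bar> < e" using e(1) eta m zz by argo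
    note z = z1 z2 z3
    have "H eta < H z"
    proof (rule DERIV_pos_imp_increasing[of eta z H])
      fix w assume w: "eta \<le> w" "w \<le> z"
      then have w': "0 < w" "w < sm" "w < xi" using z xi eta by auto
      have "q w * J w * R w > 0" using q_pos[OF w'(1,2)] J_pos[of w] w' sm_lt Rp[of w] by simp
      then show "\<exists>d. DERIV H w :> d \<and> d > 0" using H_deriv[OF w'(1,2)] by blast
    qed (use z in auto)
    moreover have "calH nu z \<le> calH nu eta" using e(2)[of z] z eta by auto
    ultimately show False using calH_eq[of z] calH_eq[of eta] z eta xi by auto
  qed
  ultimately show ?thesis unfolding first_pos_local_max_def by blast
qed

end


context bess begin
lemma main_bess:
  "\<exists>xi. first_pos_local_max (calH nu) xi \<and> xi > nu * sqrt (1 - (2 * nu) powr (-2/3))"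
proof -
  define r where "r = (2 * nu) powr (1/3)"
  have nu2: "2 * nu > 0" using nu_pos by simp
  have r0: "r > 0" using nu2 unfolding r_def by (rule powr_gt_zero[THEN iffD2, OF less_imp_neq[symmetric]])
  have r3: "r ^ 3 = 2 * nu"
  proof -
    have "r ^ 3 = r powr (real 3)" using r0 by (simp only: powr_realpow)
    also have "\<dots> = (2 * nu) powr (1/3 * real 3)" unfolding r_def by (rule powr_powr)
    also have "1/3 * real (3::nat) = (1::real)" by simp
    finally show ?thesis using nu2 by simp
  qed
  have r2eq: "r\<^sup>2 = (2 * nu) powr (2/3)"
  proof -
    have "r\<^sup>2 = r powr (real 2)" using r0 by (simp only: powr_realpow)
    also have "\<dots> = (2 * nu) powr (1/3 * real 2)" unfolding r_def by (rule powr_powr)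
    also have "1/3 * real (2::nat) = (2/3::real)" by simp
    finally show ?thesis .
  qed
  have c: "(2 * nu) powr (-2/3) = 1 / r\<^sup>2"
  proof -
    have "(-2/3::real) = - (2/3)" by simp
    then have "(2 * nu) powr (-2/3) = inverse ((2 * nu) powr (2/3))"
      by (simp only: powr_minus)
    then show ?thesis by (simp only: r2eq divide_inverse mult_1)
  qed
  have r1: "r > 1"
  proof (rule ccontr)
    assume "\<not> r > 1"
    then have "r ^ 3 \<le> 1" using r0 by (intro power_le_one) auto
    with r3 nu_ge show False by linarith
  qed
  have rr: "r ^ 3 = r * r\<^sup>2" by (simp only: power3_eq_cube power2_eq_square mult.assoc)
  have r2: "r < 2 * nu"
  proof -
    have "1 < r\<^sup>2" using r1 by (simp add: one_less_power)
    then have "r * 1 < r * r\<^sup>2" using r0 by (intro mult_strict_left_mono) auto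
    then show ?thesis using r3 rr by linarith
  qed
  define s where "s = nu / r"
  have s0: "s > 1/2" using r2 r0 by (simp add: s_def field_simps)
  have s3: "2 * s ^ 3 = nu\<^sup>2"
  proof -
    have "s ^ 3 = nu ^ 3 / r ^ 3" by (simp add: s_def power_divide)
    also have "\<dots> = nu ^ 3 / (2 * nu)" by (simp only: r3)
    finally show ?thesis using nu_pos by (simp add: power3_eq_cube power2_eq_square)
  qed
  define b where "b = nu * sqrt (1 - 1 / r\<^sup>2)"
  have cr: "0 < 1 - 1 / r\<^sup>2" using r1 by (simp add: one_less_power)
  have b0: "b > 0" using cr nu_pos by (simp add: b_def)
  have b2: "b\<^sup>2 = nu\<^sup>2 - s\<^sup>2"
  proof -
    have "b\<^sup>2 = nu\<^sup>2 * (1 - 1 / r\<^sup>2)" using cr by (simp add: b_def power_mult_distrib)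
    also have "\<dots> = nu\<^sup>2 - nu\<^sup>2 / r\<^sup>2" by (simp add: right_diff_distrib)
    also have "nu\<^sup>2 / r\<^sup>2 = s\<^sup>2" by (simp add: s_def power_divide)
    finally show ?thesis .
  qed
  have sb: "sqrt (nu\<^sup>2 - b\<^sup>2) = s" using b2 s0 by simp
  have bmu: "b\<^sup>2 < mu"
  proof -
    have "(1/2)\<^sup>2 < s\<^sup>2" using s0 by (intro power_strict_mono) auto
    then show ?thesis using b2 unfolding mu_def by (simp add: power_divide)
  qed
  have bsm: "b < sm"
  proof -
    have "sqrt (b\<^sup>2) < sqrt mu" using bmu by (rule real_sqrt_less_mono)
    then show ?thesis using b0 by (simp add: sm_def)
  qed
  have bnu: "b < nu" using bsm sm_lt by simp
  have yb: "y b > s" using y_gt[OF b0 bnu] sb by simp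
  have Rb: "R b > 0"
  proof -
    have m: "mu - b\<^sup>2 > 0" using bmu by simp
    have "b / (2 * (mu - b\<^sup>2)) \<le> s / b"
    proof -
      have e1: "b * b = 2 * s ^ 3 - s\<^sup>2" using b2 s3 by (simp add: power2_eq_square)
      have mb: "mu - b\<^sup>2 = s\<^sup>2 - 1/4" using b2 unfolding mu_def by simp
      have e2: "s * (2 * (mu - b\<^sup>2)) = 2 * s ^ 3 - s / 2"
        unfolding mb by (simp add: power2_eq_square power3_eq_cube algebra_simps)
      have e3: "s * s \<ge> s * (1/2)" using s0 by (intro mult_left_mono) auto
      have "b * b \<le> s * (2 * (mu - b\<^sup>2))" using e1 e2 e3 by (simp add: power2_eq_square)
      then show ?thesis using m b0 by (simp add: divide_simps)
    qed
    moreover have "s / b < y b / b" using yb b0 by (simp add: divide_strict_right_mono)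
    ultimately show ?thesis unfolding R_def by simp
  qed
  define P where "P x = (mu - x\<^sup>2) * u x - x\<^sup>2 / 2 * J x" for x
  have PR: "P x = x * J x * (mu - x\<^sup>2) * R x" if "0 < x" "x < sm" for x
  proof -
    have "J x > 0" using J_pos[of x] that sm_lt by simp
    moreover have "mu - x\<^sup>2 > 0" using lt_sm[OF that] by simp
    ultimately show ?thesis using that unfolding P_def R_def y_def by (simp add: field_simps) (simp add: algebra_simps power2_eq_square power4_eq_xxxx)
  qed
  have Pb: "P b > 0" using PR[OF b0 bsm] Rb J_pos[OF b0 bnu] b0 bmu by simp
  have Psm: "P sm < 0"
  proof -
    have "sm\<^sup>2 = mu" using mu_pos by (simp add: sm_def)
    moreover have "J sm > 0" using J_pos[OF sm_pos sm_lt] .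
    ultimately show ?thesis using sm_pos mu_pos by (simp add: P_def)
  qed
  have cont: "continuous_on {b..sm} P"
    unfolding P_def using b0
    by (intro continuous_intros J_cont_on u_cont_on) auto
  obtain xi where xi: "b \<le> xi" "xi \<le> sm" "P xi = 0"
    using IVT2'[of P sm 0 b] Pb Psm bsm cont by auto
  have "xi \<noteq> b" using xi(3) Pb by auto
  moreover have "xi \<noteq> sm" using xi(3) Psm by auto
  ultimately have xi': "b < xi" "xi < sm" using xi(1,2) by linarith+
  have xi0: "xi > 0" using xi' b0 by simp
  have "R xi = 0"
  proof -
    have "J xi > 0" using J_pos[OF xi0] xi' sm_lt by simp
    moreover have "mu - xi\<^sup>2 > 0" using lt_sm[OF xi0 xi'(2)] by simp
    ultimately show ?thesis using PR[OF xi0 xi'(2)] xi(3) xi0 by simp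
  qed
  then have "first_pos_local_max (calH nu) xi" using local_max_result xi0 xi' by blast
  moreover have "nu * sqrt (1 - (2 * nu) powr (-2/3)) = b" by (simp only: c b_def)
  then have "xi > nu * sqrt (1 - (2 * nu) powr (-2/3))" using xi' by simp
  ultimately show ?thesis by blast
qed

end

theorem mainTheorem2:
  fixes nu :: real
  assumes "nu \<ge> 5/3"
  shows "\<exists>xi. first_pos_local_max (calH nu) xi \<and>
           xi > nu * sqrt (1 - (2 * nu) powr (-2/3))"
proof -
  interpret bess nu using assms by unfold_locales
  show ?thesis by (rule main_bess)
qed


end
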